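(* Assume the setting below. For every $\epsilon,\eta>0$ there is $\tilde N$ such that for all $N\ge\tilde N$, $\mathbb P\big(\mu_N^{\otimes2}(R_{12}<-\epsilon)>\epsilon/3\big)<\eta.$
   Context: Setting: $\{\mu_N\}$ random Borel probability measures on the closed unit ball of $\ell_2$ on a probability space $(\Omega,\mathcal F,\mathbb P)$; given $\mu_N$, $\sigma^1,\sigma^2,\dots$ are i.i.d. from $\mu_N$, $R_{ij}=(\sigma^i,\sigma^j)$, $R^n=(R_{ij})_{i,j\le n}$, $\langle\cdot\rangle_N$ the corresponding expectation. Assume the Approximate Ghirlanda–Guerra identities: for all $n$, bounded Borel $f$ on $[-1,1]^{n^2}$, $\psi\in C[-1,1]$, $\lim_N|n\mathbb E\langle f(R^n)\psi(R_{1,n+1})\rangle_N-\mathbb E\langle f(R^n)\rangle_N\mathbb E\langle\psi(R_{12})\rangle_N-\sum_{k=2}^n\mathbb E\langle f(R^n)\psi(R_{1k})\rangle_N|=0$; and $\zeta_N=\mathbb E\mu_N^{\otimes2}(R_{12}\in\cdot)\to\zeta$ weakly for some probability measure $\zeta$ on $[-1,1]$. *)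

theory Defs
  imports "HOL-Probability.Probability"
begin

definition ball_space :: "'h::real_normed_vector measure" where
  "ball_space = restrict_space borel (cball 0 1)"

text \<open>Gibbs average with m replicas: integral over the m-fold product of M.
  Replicas are indexed 0..m-1 (replica i+1 of the paper is index i).\<close>
definition gibbs_avg :: "'h measure \<Rightarrow> nat \<Rightarrow> ((nat \<Rightarrow> 'h) \<Rightarrow> real) \<Rightarrow> real" where
  "gibbs_avg M m g = (\<integral>\<sigma>. g \<sigma> \<partial>(PiM {..<m} (\<lambda>_. M)))"

definition Eavg :: "'w measure \<Rightarrow> ('w \<Rightarrow> 'h measure) \<Rightarrow> nat \<Rightarrow> ((nat \<Rightarrow> 'h) \<Rightarrow> real) \<Rightarrow> real" where
  "Eavg P \<mu> m g = (\<integral>\<omega>. gibbs_avg (\<mu> \<omega>) m g \<partial>P)"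

definition gram :: "nat \<Rightarrow> (nat \<Rightarrow> 'h::real_inner) \<Rightarrow> (nat \<times> nat \<Rightarrow> real)" where
  "gram n \<sigma> = restrict (\<lambda>(i,j). inner (\<sigma> i) (\<sigma> j)) ({..<n} \<times> {..<n})"

end

theory Submission
  imports Defs
begin


lemma PiM_meas:
  fixes B :: "'h measure"
  assumes mu: "\<mu> \<in> P \<rightarrow>\<^sub>M prob_algebra B" and fin: "finite I"
  shows "(\<lambda>\<omega>. PiM I (\<lambda>_. \<mu> \<omega>)) \<in> P \<rightarrow>\<^sub>M prob_algebra (PiM I (\<lambda>_. B))"
proof (rule measurable_prob_algebra_generated[where \<Omega>="space (PiM I (\<lambda>_. B))" and G="prod_algebra I (\<lambda>_. B)"])
  have sp: "\<And>\<omega>. \<omega> \<in> space P \<Longrightarrow> prob_space (\<mu> \<omega>) \<and> sets (\<mu> \<omega>) = sets B"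
    using measurable_space[OF mu] by (auto simp: space_prob_algebra)
  show "sets (Pi\<^sub>M I (\<lambda>_. B)) = sigma_sets (space (Pi\<^sub>M I (\<lambda>_. B))) (prod_algebra I (\<lambda>_. B))"
    by (simp add: sets_PiM space_PiM)
  show "Int_stable (prod_algebra I (\<lambda>_. B))" by (rule Int_stable_prod_algebra)
  show "prod_algebra I (\<lambda>_. B) \<subseteq> Pow (space (Pi\<^sub>M I (\<lambda>_. B)))"
    using prod_algebra_sets_into_space by (simp add: space_PiM)
  show "\<And>a. a \<in> space P \<Longrightarrow> prob_space (Pi\<^sub>M I (\<lambda>_. \<mu> a))"
    using sp by (auto intro!: prob_space_PiM)
  show "\<And>a. a \<in> space P \<Longrightarrow> sets (Pi\<^sub>M I (\<lambda>_. \<mu> a)) = sets (Pi\<^sub>M I (\<lambda>_. B))"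
    using sp by (auto intro!: sets_PiM_cong)
  fix A assume A: "A \<in> prod_algebra I (\<lambda>_. B)"
  then obtain J E where AE: "A = prod_emb I (\<lambda>_. B) J (\<Pi>\<^sub>E j\<in>J. E j)"
    "finite J" "J \<subseteq> I" "\<And>i. i \<in> J \<Longrightarrow> E i \<in> sets B"
    by (rule prod_algebraE) blast
  have mprod: "(\<lambda>a. \<Prod>j\<in>J. emeasure (\<mu> a) (E j)) \<in> borel_measurable P"
    using AE(4) mu by (intro borel_measurable_prod_ennreal)
       (auto intro: measurable_compose[OF measurable_prob_algebraD[OF mu] measurable_emeasure_subprob_algebra])
  moreover have eqA: "emeasure (Pi\<^sub>M I (\<lambda>_. \<mu> a)) A = (\<Prod>j\<in>J. emeasure (\<mu> a) (E j))" if a: "a \<in> space P" for a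
  proof -
    have sa: "space (\<mu> a) = space B" using sp[OF a] by (metis sets_eq_imp_space_eq)
    have "A = prod_emb I (\<lambda>_. \<mu> a) J (\<Pi>\<^sub>E j\<in>J. E j)"
      using AE(1) sa by (simp add: prod_emb_def)
    then show ?thesis using sp[OF a] AE by (auto intro!: emeasure_PiM_emb)
  qed
  have "(\<lambda>a. emeasure (Pi\<^sub>M I (\<lambda>_. \<mu> a)) A) \<in> borel_measurable P \<longleftrightarrow> (\<lambda>a. \<Prod>j\<in>J. emeasure (\<mu> a) (E j)) \<in> borel_measurable P"
    by (rule measurable_cong) (rule eqA)
  then show "(\<lambda>a. emeasure (Pi\<^sub>M I (\<lambda>_. \<mu> a)) A) \<in> borel_measurable P"
    using mprod by blast
qed

lemma sets_PiM_mu: "sets M = sets N \<Longrightarrow> sets (PiM I (\<lambda>_. M)) = sets (PiM I (\<lambda>_. N))"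
  by (intro sets_PiM_cong refl)

lemma bm_PiM_mu: "sets M = sets N \<Longrightarrow> borel_measurable (PiM I (\<lambda>_. M)) = borel_measurable (PiM I (\<lambda>_. N))"
  by (rule measurable_cong_sets[OF sets_PiM_mu refl])



definition bm :: "nat \<Rightarrow> ((nat \<Rightarrow> 'h::real_normed_vector) \<Rightarrow> real) \<Rightarrow> bool" where
  "bm m g \<longleftrightarrow> g \<in> borel_measurable (PiM {..<m} (\<lambda>_. (ball_space::'h measure))) \<and> (\<exists>C. \<forall>\<sigma>. \<bar>g \<sigma>\<bar> \<le> C)"

lemma bm_op:
  assumes g: "bm m g" and h: "bm m h" and opm: "(\<lambda>(x,y). op x y) \<in> borel_measurable (borel \<Otimes>\<^sub>M borel)"
    and opb: "\<And>C D. \<exists>E. \<forall>x y. \<bar>x\<bar> \<le> C \<longrightarrow> \<bar>y\<bar> \<le> D \<longrightarrow> \<bar>op x y\<bar> \<le> E"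
  shows "bm m (\<lambda>\<sigma>. op (g \<sigma>) (h \<sigma>))"
proof -
  obtain C where C: "\<And>\<sigma>. \<bar>g \<sigma>\<bar> \<le> C" and gm: "g \<in> borel_measurable (PiM {..<m} (\<lambda>_. (ball_space::'a measure)))"
    using g unfolding bm_def by auto
  obtain D where D: "\<And>\<sigma>. \<bar>h \<sigma>\<bar> \<le> D" and hm: "h \<in> borel_measurable (PiM {..<m} (\<lambda>_. (ball_space::'a measure)))"
    using h unfolding bm_def by auto
  obtain E where E: "\<And>x y. \<bar>x\<bar> \<le> C \<Longrightarrow> \<bar>y\<bar> \<le> D \<Longrightarrow> \<bar>op x y\<bar> \<le> E" using opb by blast
  have "(\<lambda>\<sigma>. (g \<sigma>, h \<sigma>)) \<in> (PiM {..<m} (\<lambda>_. (ball_space::'a measure))) \<rightarrow>\<^sub>M borel \<Otimes>\<^sub>M borel"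
    using gm hm by (rule measurable_Pair)
  from measurable_compose[OF this opm] have "(\<lambda>\<sigma>. op (g \<sigma>) (h \<sigma>)) \<in> borel_measurable (PiM {..<m} (\<lambda>_. (ball_space::'a measure)))"
    by simp
  then show ?thesis unfolding bm_def using E C D by blast
qed

lemma bm_add: "bm m g \<Longrightarrow> bm m h \<Longrightarrow> bm m (\<lambda>\<sigma>. g \<sigma> + h \<sigma>)"
  apply (rule bm_op[where op="(+)"], assumption, assumption)
  subgoal by measurable
  subgoal for C D by (rule exI[of _ "\<bar>C\<bar> + \<bar>D\<bar>"]) auto
  done

lemma bm_diff: "bm m g \<Longrightarrow> bm m h \<Longrightarrow> bm m (\<lambda>\<sigma>. g \<sigma> - h \<sigma>)"
  apply (rule bm_op[where op="(-)"], assumption, assumption)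
  subgoal by measurable
  subgoal for C D by (rule exI[of _ "\<bar>C\<bar> + \<bar>D\<bar>"]) auto
  done

lemma bm_mult: "bm m g \<Longrightarrow> bm m h \<Longrightarrow> bm m (\<lambda>\<sigma>. g \<sigma> * h \<sigma>)"
  apply (rule bm_op[where op="(*)"], assumption, assumption)
  subgoal by measurable
  subgoal for C D
  proof (rule exI[of _ "\<bar>C\<bar> * \<bar>D\<bar>"], intro allI impI)
    fix x y :: real assume "\<bar>x\<bar> \<le> C" "\<bar>y\<bar> \<le> D"
    then have "\<bar>x\<bar> \<le> \<bar>C\<bar>" "\<bar>y\<bar> \<le> \<bar>D\<bar>" by linarith+
    then show "\<bar>x * y\<bar> \<le> \<bar>C\<bar> * \<bar>D\<bar>" unfolding abs_mult by (intro mult_mono) auto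
  qed
  done

lemma bm_const: "bm m (\<lambda>_. c)"
  unfolding bm_def by auto

lemma bm_sum: "finite S \<Longrightarrow> (\<And>i. i \<in> S \<Longrightarrow> bm m (g i)) \<Longrightarrow> bm m (\<lambda>\<sigma>. \<Sum>i\<in>S. g i \<sigma>)"
  by (induction S rule: finite_induct) (auto intro: bm_add bm_const)

lemma bm_prod: "finite S \<Longrightarrow> (\<And>i. i \<in> S \<Longrightarrow> bm m (g i)) \<Longrightarrow> bm m (\<lambda>\<sigma>. \<Prod>i\<in>S. g i \<sigma>)"
  by (induction S rule: finite_induct) (auto intro: bm_mult bm_const)

lemma gibbs_integrable:
  assumes "prob_space M" "sets M = sets ball_space" "bm m g"
  shows "integrable (PiM {..<m} (\<lambda>_. M)) g"
proof -
  interpret prob_space "PiM {..<m} (\<lambda>_. M)" using assms by (auto intro!: prob_space_PiM)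
  obtain C where C: "\<And>\<sigma>. \<bar>g \<sigma>\<bar> \<le> C" and gm: "g \<in> borel_measurable (PiM {..<m} (\<lambda>_. ball_space))"
    using assms(3) unfolding bm_def by auto
  have "g \<in> borel_measurable (PiM {..<m} (\<lambda>_. M))"
    unfolding bm_PiM_mu[OF assms(2)] by (rule gm)
  then show ?thesis using C by (intro integrable_const_bound[where B=C]) auto
qed

lemma gibbs_bound:
  assumes "prob_space M" "sets M = sets ball_space" "bm m g" "\<And>\<sigma>. \<bar>g \<sigma>\<bar> \<le> C"
  shows "\<bar>gibbs_avg M m g\<bar> \<le> C"
proof -
  interpret prob_space "PiM {..<m} (\<lambda>_. M)" using assms by (auto intro!: prob_space_PiM)
  have i: "integrable (PiM {..<m} (\<lambda>_. M)) g" by (rule gibbs_integrable[OF assms(1-3)])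
  have "\<bar>gibbs_avg M m g\<bar> \<le> (\<integral>\<sigma>. \<bar>g \<sigma>\<bar> \<partial>(PiM {..<m} (\<lambda>_. M)))"
    unfolding gibbs_avg_def by (rule integral_abs_bound)
  also have "\<dots> \<le> (\<integral>\<sigma>. C \<partial>(PiM {..<m} (\<lambda>_. M)))"
    using i assms(4) by (intro integral_mono) auto
  finally show ?thesis by (simp add: prob_space)
qed

lemma gibbs_meas:
  assumes mu: "\<mu> \<in> P \<rightarrow>\<^sub>M prob_algebra ball_space" and g: "bm m g"
  shows "(\<lambda>\<omega>. gibbs_avg (\<mu> \<omega>) m g) \<in> borel_measurable P"
  unfolding gibbs_avg_def
  using g unfolding bm_def
  by (intro measurable_compose[OF measurable_prob_algebraD[OF PiM_meas[OF mu]] integral_measurable_subprob_algebra]) auto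

lemma mu_props:
  fixes \<mu> :: "'w \<Rightarrow> 'h::real_normed_vector measure"
  assumes mu: "\<mu> \<in> P \<rightarrow>\<^sub>M prob_algebra ball_space" and w: "\<omega> \<in> space P"
  shows "prob_space (\<mu> \<omega>)" "sets (\<mu> \<omega>) = sets ball_space" "space (\<mu> \<omega>) = cball 0 1"
proof -
  show p: "prob_space (\<mu> \<omega>)" "sets (\<mu> \<omega>) = sets ball_space"
    using measurable_space[OF mu w] by (auto simp: space_prob_algebra)
  have "space (\<mu> \<omega>) = space ball_space" using p(2) by (rule sets_eq_imp_space_eq)
  also have "space (ball_space :: 'h measure) = cball 0 1" by (simp add: ball_space_def space_restrict_space)
  finally show "space (\<mu> \<omega>) = cball 0 1" .
qed

lemma Eavg_integrable:
  assumes P: "prob_space P" and mu: "\<mu> \<in> P \<rightarrow>\<^sub>M prob_algebra ball_space" and g: "bm m g"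
  shows "integrable P (\<lambda>\<omega>. gibbs_avg (\<mu> \<omega>) m g)"
proof -
  interpret prob_space P by fact
  obtain C where C: "\<And>\<sigma>. \<bar>g \<sigma>\<bar> \<le> C" using g unfolding bm_def by auto
  show ?thesis
    using gibbs_bound[OF mu_props(1,2)[OF mu] g C] gibbs_meas[OF mu g]
    by (intro integrable_const_bound[where B=C]) auto
qed

lemma Eavg_add:
  assumes P: "prob_space P" and mu: "\<mu> \<in> P \<rightarrow>\<^sub>M prob_algebra ball_space" and g: "bm m g" and h: "bm m h"
  shows "Eavg P \<mu> m (\<lambda>\<sigma>. g \<sigma> + h \<sigma>) = Eavg P \<mu> m g + Eavg P \<mu> m h"
proof -
  have "Eavg P \<mu> m (\<lambda>\<sigma>. g \<sigma> + h \<sigma>) = (\<integral>\<omega>. gibbs_avg (\<mu> \<omega>) m g + gibbs_avg (\<mu> \<omega>) m h \<partial>P)"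
    unfolding Eavg_def gibbs_avg_def
    using gibbs_integrable[OF mu_props(1,2)[OF mu] g] gibbs_integrable[OF mu_props(1,2)[OF mu] h]
    by (intro Bochner_Integration.integral_cong) auto
  also have "\<dots> = Eavg P \<mu> m g + Eavg P \<mu> m h"
    unfolding Eavg_def using Eavg_integrable[OF P mu g] Eavg_integrable[OF P mu h] by simp
  finally show ?thesis .
qed

lemma Eavg_diff:
  assumes P: "prob_space P" and mu: "\<mu> \<in> P \<rightarrow>\<^sub>M prob_algebra ball_space" and g: "bm m g" and h: "bm m h"
  shows "Eavg P \<mu> m (\<lambda>\<sigma>. g \<sigma> - h \<sigma>) = Eavg P \<mu> m g - Eavg P \<mu> m h"
proof -
  have "Eavg P \<mu> m (\<lambda>\<sigma>. g \<sigma> - h \<sigma>) = (\<integral>\<omega>. gibbs_avg (\<mu> \<omega>) m g - gibbs_avg (\<mu> \<omega>) m h \<partial>P)"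
    unfolding Eavg_def gibbs_avg_def
    using gibbs_integrable[OF mu_props(1,2)[OF mu] g] gibbs_integrable[OF mu_props(1,2)[OF mu] h]
    by (intro Bochner_Integration.integral_cong) auto
  also have "\<dots> = Eavg P \<mu> m g - Eavg P \<mu> m h"
    unfolding Eavg_def using Eavg_integrable[OF P mu g] Eavg_integrable[OF P mu h] by simp
  finally show ?thesis .
qed

lemma Eavg_sum:
  assumes P: "prob_space P" and mu: "\<mu> \<in> P \<rightarrow>\<^sub>M prob_algebra ball_space"
    and S: "finite S" and g: "\<And>i. i \<in> S \<Longrightarrow> bm m (g i)"
  shows "Eavg P \<mu> m (\<lambda>\<sigma>. \<Sum>i\<in>S. g i \<sigma>) = (\<Sum>i\<in>S. Eavg P \<mu> m (g i))"
  using S g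
proof (induction S rule: finite_induct)
  case empty
  then show ?case unfolding Eavg_def gibbs_avg_def by simp
next
  case (insert x F)
  then show ?case
    by (simp add: Eavg_add[OF P mu] bm_sum)
qed

lemma Eavg_const:
  assumes P: "prob_space P" and mu: "\<mu> \<in> P \<rightarrow>\<^sub>M prob_algebra ball_space"
  shows "Eavg P \<mu> m (\<lambda>_. c) = c"
proof -
  interpret prob_space P by fact
  have "Eavg P \<mu> m (\<lambda>_. c) = (\<integral>\<omega>. c \<partial>P)"
    unfolding Eavg_def gibbs_avg_def
  proof (intro Bochner_Integration.integral_cong refl)
    fix \<omega> assume "\<omega> \<in> space P"
    then interpret Q: prob_space "PiM {..<m} (\<lambda>_. \<mu> \<omega>)" using mu_props[OF mu] by (auto intro!: prob_space_PiM)
    show "(\<integral>\<sigma>. c \<partial>(PiM {..<m} (\<lambda>_. \<mu> \<omega>))) = c" by (simp add: Q.prob_space)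
  qed
  then show ?thesis by (simp add: prob_space)
qed

lemma Eavg_mono:
  assumes P: "prob_space P" and mu: "\<mu> \<in> P \<rightarrow>\<^sub>M prob_algebra ball_space" and g: "bm m g" and h: "bm m h"
    and le: "\<And>\<sigma>. (\<And>i. i < m \<Longrightarrow> norm (\<sigma> i) \<le> 1) \<Longrightarrow> g \<sigma> \<le> h \<sigma>"
  shows "Eavg P \<mu> m g \<le> Eavg P \<mu> m h"
  unfolding Eavg_def
proof (intro integral_mono Eavg_integrable[OF P mu g] Eavg_integrable[OF P mu h])
  fix \<omega> assume w: "\<omega> \<in> space P"
  show "gibbs_avg (\<mu> \<omega>) m g \<le> gibbs_avg (\<mu> \<omega>) m h"
    unfolding gibbs_avg_def
  proof (intro integral_mono gibbs_integrable[OF mu_props(1,2)[OF mu w] g] gibbs_integrable[OF mu_props(1,2)[OF mu w] h] le)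
    fix \<sigma> i assume "\<sigma> \<in> space (PiM {..<m} (\<lambda>_. \<mu> \<omega>))" "i < m"
    then show "norm (\<sigma> i) \<le> 1" using mu_props(3)[OF mu w] by (auto simp: space_PiM)
  qed
qed



definition phi :: "real \<Rightarrow> real \<Rightarrow> nat \<Rightarrow> real \<Rightarrow> real" where
  "phi e d j x = min 1 (max 0 ((-e + (real j - 1) * d - x) / d))"

definition OD :: "nat \<Rightarrow> (nat \<times> nat) set" where
  "OD m = {p \<in> {..<m} \<times> {..<m}. fst p \<noteq> snd p}"

definition Hf :: "real \<Rightarrow> real \<Rightarrow> nat \<Rightarrow> nat \<Rightarrow> (nat \<times> nat \<Rightarrow> real) \<Rightarrow> real" where
  "Hf e d m j x = (\<Prod>p\<in>OD m. phi e d j (x p))"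

definition Qf :: "real \<Rightarrow> real \<Rightarrow> nat \<Rightarrow> nat \<Rightarrow> (nat \<Rightarrow> 'h::real_inner) \<Rightarrow> real" where
  "Qf e d m j \<sigma> = (\<Prod>p\<in>OD m. phi e d j (inner (\<sigma> (fst p)) (\<sigma> (snd p))))"

lemma finite_OD[simp]: "finite (OD m)"
  unfolding OD_def by (rule finite_subset[of _ "{..<m} \<times> {..<m}"]) auto

lemma phi_nonneg: "0 \<le> phi e d j x" unfolding phi_def by simp
lemma phi_le1: "phi e d j x \<le> 1" unfolding phi_def by simp

lemma phi_mono_j: assumes "d > 0" "j \<le> k" shows "phi e d j x \<le> phi e d k x"
proof -
  have "(-e + (real j - 1) * d - x) / d \<le> (-e + (real k - 1) * d - x) / d"
    using assms by (intro divide_right_mono) (auto intro!: mult_right_mono)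
  then show ?thesis unfolding phi_def by linarith
qed

lemma phi_pos_lt: assumes "d > 0" "phi e d j x > 0" shows "x < -e + (real j - 1) * d"
proof (rule ccontr)
  assume "\<not> ?thesis"
  then have "(-e + (real j - 1) * d - x) / d \<le> 0" using assms(1) by (simp add: divide_nonpos_pos)
  then show False using assms(2) unfolding phi_def by linarith
qed

lemma phi_pos_next: assumes "d > 0" "phi e d j x > 0" shows "phi e d (Suc j) x = 1"
proof -
  have "x < -e + (real j - 1) * d" using phi_pos_lt[OF assms] .
  then have "1 \<le> (-e + (real (Suc j) - 1) * d - x) / d" using assms(1)
    by (simp add: field_simps)
  then show ?thesis unfolding phi_def by linarith
qed

lemma phi_two: assumes "d > 0" "x < -e" shows "phi e d 2 x = 1"
proof -
  have "1 \<le> (-e + (real 2 - 1) * d - x) / d" using assms by (simp add: field_simps)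
  then show ?thesis unfolding phi_def by simp
qed

lemma phi_cont: "continuous_on S (phi e d j)"
  unfolding phi_def divide_inverse by (intro continuous_intros)

lemma phi_meas[measurable]: "phi e d j \<in> borel_measurable borel"
  using phi_cont[of UNIV] by (rule borel_measurable_continuous_onI)

lemma Hf_gram: "Hf e d m j (gram m \<sigma>) = Qf e d m j \<sigma>"
  unfolding Hf_def Qf_def gram_def OD_def by (intro prod.cong refl) (auto simp: case_prod_beta)

lemma Qf_nonneg: "0 \<le> Qf e d m j \<sigma>"
  unfolding Qf_def by (intro prod_nonneg) (auto simp: phi_nonneg)

lemma Qf_le1: "Qf e d m j \<sigma> \<le> 1"
  unfolding Qf_def by (intro prod_le_1) (auto simp: phi_nonneg phi_le1)

lemma Qf_perm:
  assumes bij: "bij_betw \<pi> {..<m} {..<m}" and eq: "\<And>i. i < m \<Longrightarrow> \<tau> i = \<sigma> (\<pi> i)"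
  shows "Qf e d m j \<tau> = Qf e d m j \<sigma>"
proof -
  have b: "bij_betw (\<lambda>p. (\<pi> (fst p), \<pi> (snd p))) (OD m) (OD m)"
  proof -
    have inj: "inj_on \<pi> {..<m}" using bij by (rule bij_betw_imp_inj_on)
    have im: "\<pi> ` {..<m} = {..<m}" using bij by (rule bij_betw_imp_surj_on)
    show ?thesis unfolding bij_betw_def
    proof
      show "inj_on (\<lambda>p. (\<pi> (fst p), \<pi> (snd p))) (OD m)"
        using inj unfolding OD_def inj_on_def by auto
      show "(\<lambda>p. (\<pi> (fst p), \<pi> (snd p))) ` OD m = OD m"
      proof
        show "(\<lambda>p. (\<pi> (fst p), \<pi> (snd p))) ` OD m \<subseteq> OD m"
          using inj im unfolding OD_def inj_on_def by auto
        show "OD m \<subseteq> (\<lambda>p. (\<pi> (fst p), \<pi> (snd p))) ` OD m"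
        proof
          fix p assume p: "p \<in> OD m"
          obtain a where a: "a < m" "\<pi> a = fst p" using p im unfolding OD_def by (metis (no_types, lifting) imageE lessThan_iff mem_Collect_eq mem_Sigma_iff prod.collapse)
          obtain b where b: "b < m" "\<pi> b = snd p" using p im unfolding OD_def by (metis (no_types, lifting) imageE lessThan_iff mem_Collect_eq mem_Sigma_iff prod.collapse)
          have "a \<noteq> b" using a b p unfolding OD_def by auto
          then have "(a, b) \<in> OD m" using a b unfolding OD_def by auto
          then show "p \<in> (\<lambda>p. (\<pi> (fst p), \<pi> (snd p))) ` OD m" using a b by (auto intro!: image_eqI[of _ _ "(a,b)"])
        qed
      qed
    qed
  qed
  have "Qf e d m j \<tau> = (\<Prod>p\<in>OD m. phi e d j (inner (\<sigma> (\<pi> (fst p))) (\<sigma> (\<pi> (snd p)))))"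
    unfolding Qf_def using eq by (intro prod.cong refl) (auto simp: OD_def)
  also have "\<dots> = Qf e d m j \<sigma>"
    unfolding Qf_def using prod.reindex_bij_betw[OF b, of "\<lambda>p. phi e d j (inner (\<sigma> (fst p)) (\<sigma> (snd p)))"]
    by simp
  finally show ?thesis .
qed

lemma OD_Suc: "OD (Suc m) = OD m \<union> ((\<lambda>l. (l, m)) ` {..<m} \<union> (\<lambda>l. (m, l)) ` {..<m})"
  unfolding OD_def by (auto simp: less_Suc_eq)

lemma Qf_step:
  "Qf e d (Suc m) j \<sigma> = Qf e d m j \<sigma> * (\<Prod>l<m. (phi e d j (inner (\<sigma> l) (\<sigma> m)))\<^sup>2)"
proof -
  let ?f = "\<lambda>p. phi e d j (inner (\<sigma> (fst p)) (\<sigma> (snd p)))"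
  have d1: "OD m \<inter> ((\<lambda>l. (l, m)) ` {..<m} \<union> (\<lambda>l. (m, l)) ` {..<m}) = {}" unfolding OD_def by auto
  have d2: "(\<lambda>l. (l, m)) ` {..<m} \<inter> (\<lambda>l. (m, l)) ` {..<m} = {}" by auto
  have "Qf e d (Suc m) j \<sigma> = Qf e d m j \<sigma> * (prod ?f ((\<lambda>l. (l, m)) ` {..<m}) * prod ?f ((\<lambda>l. (m, l)) ` {..<m}))"
    unfolding Qf_def OD_Suc by (simp add: prod.union_disjoint[OF _ _ d1] prod.union_disjoint[OF _ _ d2])
  also have "prod ?f ((\<lambda>l. (l, m)) ` {..<m}) = (\<Prod>l<m. phi e d j (inner (\<sigma> l) (\<sigma> m)))"
    by (subst prod.reindex) (auto simp: inj_on_def)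
  also have "prod ?f ((\<lambda>l. (m, l)) ` {..<m}) = (\<Prod>l<m. phi e d j (inner (\<sigma> l) (\<sigma> m)))"
    by (subst prod.reindex) (auto simp: inj_on_def inner_commute)
  finally show ?thesis by (simp add: power2_eq_square prod.distrib)
qed

lemma weier:
  fixes a :: "'a \<Rightarrow> real"
  assumes "finite L" "\<And>l. l \<in> L \<Longrightarrow> 0 \<le> a l \<and> a l \<le> 1"
  shows "1 - (\<Sum>l\<in>L. 1 - a l) \<le> (\<Prod>l\<in>L. a l)"
  using assms
proof (induction L rule: finite_induct)
  case empty then show ?case by simp
next
  case (insert x F)
  then have IH: "1 - (\<Sum>l\<in>F. 1 - a l) \<le> (\<Prod>l\<in>F. a l)" and ax: "0 \<le> a x" "a x \<le> 1"
    and p: "0 \<le> (\<Prod>l\<in>F. a l)" "(\<Prod>l\<in>F. a l) \<le> 1" by (auto intro!: prod_nonneg prod_le_1)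
  have "1 - (\<Sum>l\<in>insert x F. 1 - a l) = (1 - (\<Sum>l\<in>F. 1 - a l)) - (1 - a x)" using insert by simp
  also have "\<dots> \<le> (\<Prod>l\<in>F. a l) - (1 - a x)" using IH by simp
  also have "\<dots> \<le> a x * (\<Prod>l\<in>F. a l)"
  proof -
    have "(1 - a x) * (1 - (\<Prod>l\<in>F. a l)) \<ge> 0" using ax p by simp
    then show ?thesis by (simp add: algebra_simps)
  qed
  finally show ?case using insert by simp
qed



lemma Qf_step_ineq:
  assumes d: "d > 0"
  shows "Qf e d m m \<sigma> - (\<Sum>l<m. Qf e d m m \<sigma> * (1 - (phi e d (Suc m) (inner (\<sigma> l) (\<sigma> m)))\<^sup>2))
         \<le> Qf e d (Suc m) (Suc m) \<sigma>"
proof -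
  let ?A = "Qf e d m (Suc m) \<sigma>" and ?B = "Qf e d m m \<sigma>"
  let ?C = "\<Prod>l<m. (phi e d (Suc m) (inner (\<sigma> l) (\<sigma> m)))\<^sup>2"
  let ?D = "1 - (\<Sum>l<m. 1 - (phi e d (Suc m) (inner (\<sigma> l) (\<sigma> m)))\<^sup>2)"
  have AB: "?B \<le> ?A" unfolding Qf_def
    by (intro prod_mono) (auto simp: phi_nonneg phi_mono_j[OF d])
  have B0: "0 \<le> ?B" by (rule Qf_nonneg)
  have CD: "?D \<le> ?C"
    by (rule weier) (auto simp: phi_nonneg phi_le1 power_le_one)
  have C0: "0 \<le> ?C" by (intro prod_nonneg) auto
  have "?B * ?D \<le> ?A * ?C"
  proof (cases "?D \<ge> 0")
    case True then show ?thesis using AB B0 CD by (intro mult_mono) auto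
  next
    case False
    then have "?B * ?D \<le> 0" using B0 by (simp add: mult_nonneg_nonpos)
    also have "0 \<le> ?A * ?C" using B0 AB C0 by simp
    finally show ?thesis .
  qed
  moreover have "?B * ?D = ?B - (\<Sum>l<m. ?B * (1 - (phi e d (Suc m) (inner (\<sigma> l) (\<sigma> m)))\<^sup>2))"
    by (simp add: right_diff_distrib sum_distrib_left)
  ultimately show ?thesis by (simp add: Qf_step)
qed

lemma Qf_zero_term:
  assumes d: "d > 0" and k: "1 \<le> k" "k < m"
  shows "Qf e d m m \<sigma> * (1 - (phi e d (Suc m) (inner (\<sigma> 0) (\<sigma> k)))\<^sup>2) = 0"
proof (cases "phi e d m (inner (\<sigma> 0) (\<sigma> k)) > 0")
  case True
  then show ?thesis using phi_pos_next[OF d True] by simp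
next
  case False
  then have z: "phi e d m (inner (\<sigma> 0) (\<sigma> k)) = 0" using phi_nonneg[of e d m] by (meson antisym not_le)
  have "(0, k) \<in> OD m" using k unfolding OD_def by auto
  then have "Qf e d m m \<sigma> = 0" unfolding Qf_def using z
    by (intro prod_zero) (auto intro!: bexI[of _ "(0,k)"])
  then show ?thesis by simp
qed

lemma Qf_positivity:
  fixes \<sigma> :: "nat \<Rightarrow> 'h::real_inner"
  assumes d: "d > 0" and n: "n \<ge> 1" and b: "1 + (real n - 1) * (-e + (real n - 1) * d) < 0"
    and norm: "\<And>i. i < n \<Longrightarrow> norm (\<sigma> i) \<le> 1"
  shows "Qf e d n n \<sigma> = 0"
proof (rule ccontr)
  let ?b = "-e + (real n - 1) * d"
  assume nz: "Qf e d n n \<sigma> \<noteq> 0"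
  have lt: "inner (\<sigma> i) (\<sigma> k) < ?b" if "i < n" "k < n" "i \<noteq> k" for i k
  proof -
    have "(i, k) \<in> OD n" using that unfolding OD_def by auto
    then have "phi e d n (inner (\<sigma> i) (\<sigma> k)) \<noteq> 0" using nz unfolding Qf_def
      by (metis (no_types, lifting) finite_OD fst_conv prod_zero_iff snd_conv)
    then have "phi e d n (inner (\<sigma> i) (\<sigma> k)) > 0" using phi_nonneg[of e d n "inner (\<sigma> i) (\<sigma> k)"] by linarith
    then show ?thesis by (rule phi_pos_lt[OF d])
  qed
  have row: "(\<Sum>k<n. inner (\<sigma> i) (\<sigma> k)) < 0" if i: "i < n" for i
  proof -
    have "(\<Sum>k<n. inner (\<sigma> i) (\<sigma> k)) = inner (\<sigma> i) (\<sigma> i) + (\<Sum>k\<in>{..<n} - {i}. inner (\<sigma> i) (\<sigma> k))"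
      using i by (subst sum.remove[of _ i]) auto
    also have "\<dots> \<le> 1 + (\<Sum>k\<in>{..<n} - {i}. ?b)"
    proof (intro add_mono sum_mono)
      have "inner (\<sigma> i) (\<sigma> i) = (norm (\<sigma> i))\<^sup>2" by (simp add: power2_norm_eq_inner)
      also have "\<dots> \<le> 1" using norm[OF i] by (simp add: power_le_one)
      finally show "inner (\<sigma> i) (\<sigma> i) \<le> 1" .
      fix k assume "k \<in> {..<n} - {i}"
      then show "inner (\<sigma> i) (\<sigma> k) \<le> ?b" using lt[OF i, of k] by auto
    qed
    also have "\<dots> = 1 + (real n - 1) * ?b" using i by (simp add: card_Diff_singleton of_nat_diff)
    finally show ?thesis using b by linarith
  qed
  have "(\<Sum>i<n. \<Sum>k<n. inner (\<sigma> i) (\<sigma> k)) < (\<Sum>i<n. 0)"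
    using n row by (intro sum_strict_mono) (auto simp: lessThan_empty_iff)
  moreover have "(\<Sum>i<n. \<Sum>k<n. inner (\<sigma> i) (\<sigma> k)) = inner (\<Sum>i<n. \<sigma> i) (\<Sum>k<n. \<sigma> k)"
    by (simp only: inner_sum_left) (simp add: inner_sum_right)
  ultimately show False using inner_ge_zero[of "\<Sum>i<n. \<sigma> i"] by simp
qed



lemma inner_comp_meas:
  assumes "i < M" "k < M"
  shows "(\<lambda>\<sigma>. inner (\<sigma> i) (\<sigma> k)) \<in> borel_measurable (PiM {..<M} (\<lambda>_. (ball_space :: 'h::{real_inner, second_countable_topology} measure)))"
proof -
  have id: "(\<lambda>x. x) \<in> (ball_space :: 'h measure) \<rightarrow>\<^sub>M borel"
    unfolding ball_space_def by (rule measurable_restrict_space1) simp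
  have "(\<lambda>\<sigma>. \<sigma> j) \<in> borel_measurable (PiM {..<M} (\<lambda>_. (ball_space :: 'h measure)))" if "j < M" for j
  proof -
    have "(\<lambda>\<sigma>. \<sigma> j) \<in> PiM {..<M} (\<lambda>_. (ball_space :: 'h measure)) \<rightarrow>\<^sub>M ball_space"
      by (rule measurable_component_singleton) (use that in simp)
    from measurable_compose[OF this id] show ?thesis .
  qed
  then show ?thesis using assms by (intro borel_measurable_inner) auto
qed

lemma bm_inner_comp:
  assumes "i < M" "k < M" "h \<in> borel_measurable borel" "\<And>x. \<bar>h x\<bar> \<le> C"
  shows "bm M (\<lambda>\<sigma>. h (inner (\<sigma> i) (\<sigma> (k::nat)::'h::{real_inner, second_countable_topology})))"
  unfolding bm_def using assms
  by (auto intro: measurable_compose[OF inner_comp_meas])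

lemma bm_Qf:
  assumes "m \<le> M" "d > 0"
  shows "bm M (Qf e d m j :: (nat \<Rightarrow> 'h::{real_inner, second_countable_topology}) \<Rightarrow> real)"
proof -
  have "bm M (\<lambda>\<sigma>::nat \<Rightarrow> 'h. \<Prod>p\<in>OD m. phi e d j (inner (\<sigma> (fst p)) (\<sigma> (snd p))))"
  proof (rule bm_prod)
    fix p assume "p \<in> OD m"
    then have "fst p < M" "snd p < M" using assms unfolding OD_def by auto
    then show "bm M (\<lambda>\<sigma>::nat \<Rightarrow> 'h. phi e d j (inner (\<sigma> (fst p)) (\<sigma> (snd p))))"
      by (rule bm_inner_comp[where C=1]) (auto simp: phi_nonneg phi_le1 abs_le_iff intro: order_trans[OF _ phi_le1])
  qed simp
  then show ?thesis unfolding Qf_def[abs_def] by simp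
qed

lemma Eavg_perm:
  fixes \<mu> :: "'w \<Rightarrow> 'h::{real_inner, second_countable_topology} measure"
  assumes P: "prob_space P" and mu: "\<mu> \<in> P \<rightarrow>\<^sub>M prob_algebra ball_space" and g: "bm M g"
    and pi: "\<pi> \<in> {..<M} \<rightarrow> {..<M}" "inj_on \<pi> {..<M}"
  shows "Eavg P \<mu> M (\<lambda>\<sigma>. g (\<lambda>i\<in>{..<M}. \<sigma> (\<pi> i))) = Eavg P \<mu> M g"
  unfolding Eavg_def
proof (intro Bochner_Integration.integral_cong refl)
  fix \<omega> assume w: "\<omega> \<in> space P"
  let ?M = "PiM {..<M} (\<lambda>_. \<mu> \<omega>)"
  have gm: "g \<in> borel_measurable ?M"
    using g unfolding bm_def bm_PiM_mu[OF mu_props(2)[OF mu w]] by simp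
  have T: "(\<lambda>x. \<lambda>n\<in>{..<M}. x (\<pi> n)) \<in> ?M \<rightarrow>\<^sub>M ?M"
    using pi by (intro measurable_restrict) (auto intro!: measurable_component_singleton)
  have D: "distr ?M ?M (\<lambda>x. \<lambda>n\<in>{..<M}. x (\<pi> n)) = ?M"
    using distr_PiM_reindex[of "{..<M}" "\<lambda>_. \<mu> \<omega>" \<pi> "{..<M}"] pi mu_props(1)[OF mu w] by simp
  have "gibbs_avg (\<mu> \<omega>) M g = integral\<^sup>L (distr ?M ?M (\<lambda>x. \<lambda>n\<in>{..<M}. x (\<pi> n))) g"
    unfolding gibbs_avg_def D ..
  also have "\<dots> = gibbs_avg (\<mu> \<omega>) M (\<lambda>\<sigma>. g (\<lambda>i\<in>{..<M}. \<sigma> (\<pi> i)))"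
    unfolding gibbs_avg_def by (rule integral_distr[OF T gm])
  finally show "gibbs_avg (\<mu> \<omega>) M (\<lambda>\<sigma>. g (\<lambda>i\<in>{..<M}. \<sigma> (\<pi> i))) = gibbs_avg (\<mu> \<omega>) M g" by simp
qed



lemma pair_eq_distr:
  assumes M: "prob_space M"
  shows "M \<Otimes>\<^sub>M M = distr (PiM {..<2} (\<lambda>_. M)) (M \<Otimes>\<^sub>M M) (\<lambda>\<sigma>. (\<sigma> 0, \<sigma> (1::nat)))"
proof (rule pair_measure_eqI)
  interpret prob_space M by fact
  interpret PS: product_sigma_finite "\<lambda>_::nat. M" by unfold_locales
  show "sigma_finite_measure M" by unfold_locales
  show "sigma_finite_measure M" by unfold_locales
  show "sets (M \<Otimes>\<^sub>M M) = sets (distr (PiM {..<2} (\<lambda>_. M)) (M \<Otimes>\<^sub>M M) (\<lambda>\<sigma>. (\<sigma> 0, \<sigma> (1::nat))))" by simp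
  fix A B assume A: "A \<in> sets M" and B: "B \<in> sets M"
  have T: "(\<lambda>\<sigma>. (\<sigma> 0, \<sigma> (1::nat))) \<in> PiM {..<2} (\<lambda>_. M) \<rightarrow>\<^sub>M M \<Otimes>\<^sub>M M"
    by (intro measurable_Pair measurable_component_singleton) auto
  have two: "{..<2::nat} = {0, 1}" by auto
  have pre: "(\<lambda>\<sigma>. (\<sigma> 0, \<sigma> (1::nat))) -` (A \<times> B) \<inter> space (PiM {..<2} (\<lambda>_. M)) = Pi\<^sub>E {..<2} (\<lambda>i. if i = 0 then A else B)"
  proof (rule set_eqI)
    fix x
    show "x \<in> (\<lambda>\<sigma>. (\<sigma> 0, \<sigma> (1::nat))) -` (A \<times> B) \<inter> space (PiM {..<2} (\<lambda>_. M)) \<longleftrightarrow> x \<in> Pi\<^sub>E {..<2} (\<lambda>i. if i = 0 then A else B)"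
      using sets.sets_into_space[OF A] sets.sets_into_space[OF B]
      unfolding space_PiM two by (simp add: PiE_iff) blast
  qed
  have "emeasure (distr (PiM {..<2} (\<lambda>_. M)) (M \<Otimes>\<^sub>M M) (\<lambda>\<sigma>. (\<sigma> 0, \<sigma> (1::nat)))) (A \<times> B)
      = emeasure (PiM {..<2::nat} (\<lambda>_. M)) (Pi\<^sub>E {..<2::nat} (\<lambda>i. if i = 0 then A else B))"
  proof -
    have AB: "A \<times> B \<in> sets (M \<Otimes>\<^sub>M M)" using A B by simp
    show ?thesis by (simp only: emeasure_distr[OF T AB] pre)
  qed
  also have "\<dots> = (\<Prod>i\<in>{..<2::nat}. emeasure M (if i = 0 then A else B))"
    using A B by (intro PS.emeasure_PiM) auto
  also have "\<dots> = emeasure M A * emeasure M B" unfolding two by simp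
  finally show "emeasure M A * emeasure M B = emeasure (distr (PiM {..<2} (\<lambda>_. M)) (M \<Otimes>\<^sub>M M) (\<lambda>\<sigma>. (\<sigma> 0, \<sigma> (1::nat)))) (A \<times> B)" by simp
qed

lemma pair_le_gibbs:
  fixes M :: "'h::{real_inner, second_countable_topology} measure"
  assumes M: "prob_space M" "sets M = sets ball_space"
    and hm: "h \<in> borel_measurable borel" and hb: "\<And>x. 0 \<le> h x" "\<And>x. h x \<le> 1"
    and h1: "\<And>x. x < - e \<Longrightarrow> h x = 1"
  shows "measure (M \<Otimes>\<^sub>M M) {z \<in> space (M \<Otimes>\<^sub>M M). inner (fst z) (snd z) < - e}
         \<le> gibbs_avg M 2 (\<lambda>\<sigma>. h (inner (\<sigma> 0) (\<sigma> 1)))"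
proof -
  interpret prob_space M by fact
  interpret PP: prob_space "M \<Otimes>\<^sub>M M" using M by (intro prob_space_pair)
  have id: "(\<lambda>x. x) \<in> M \<rightarrow>\<^sub>M borel"
    unfolding measurable_cong_sets[OF M(2) refl] ball_space_def by (rule measurable_restrict_space1) simp
  have im: "(\<lambda>z. inner (fst z) (snd z)) \<in> borel_measurable (M \<Otimes>\<^sub>M M)"
    by (intro borel_measurable_inner measurable_compose[OF measurable_fst id] measurable_compose[OF measurable_snd id])
  let ?S = "{z \<in> space (M \<Otimes>\<^sub>M M). inner (fst z) (snd z) < - e}"
  have S: "?S \<in> sets (M \<Otimes>\<^sub>M M)" using im by measurable
  have hi: "integrable (M \<Otimes>\<^sub>M M) (\<lambda>z. h (inner (fst z) (snd z)))"
    using hb by (intro PP.integrable_const_bound[where B=1] measurable_compose[OF im hm]) auto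
  have "measure (M \<Otimes>\<^sub>M M) ?S = (\<integral>z. indicator ?S z \<partial>(M \<Otimes>\<^sub>M M))"
    using S by simp
  also have "\<dots> \<le> (\<integral>z. h (inner (fst z) (snd z)) \<partial>(M \<Otimes>\<^sub>M M))"
  proof (rule integral_mono[OF _ hi])
    show "integrable (M \<Otimes>\<^sub>M M) (indicator ?S :: _ \<Rightarrow> real)"
      using S by (intro PP.integrable_const_bound[where B=1] borel_measurable_indicator) (auto simp: indicator_def)
    fix z show "indicator ?S z \<le> h (inner (fst z) (snd z))"
      using hb h1 by (auto simp: indicator_def)
  qed
  also have "\<dots> = (\<integral>z. h (inner (fst z) (snd z)) \<partial>(distr (PiM {..<2} (\<lambda>_. M)) (M \<Otimes>\<^sub>M M) (\<lambda>\<sigma>. (\<sigma> 0, \<sigma> (1::nat)))))"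
    using pair_eq_distr[OF M(1)] by simp
  also have "\<dots> = gibbs_avg M 2 (\<lambda>\<sigma>. h (inner (\<sigma> 0) (\<sigma> 1)))"
    unfolding gibbs_avg_def
    by (subst integral_distr) (auto intro!: measurable_Pair measurable_component_singleton measurable_compose[OF im hm])
  finally show ?thesis .
qed



definition GGt :: "'w measure \<Rightarrow> ('w \<Rightarrow> 'h::real_inner measure) \<Rightarrow> nat \<Rightarrow> ((nat \<times> nat \<Rightarrow> real) \<Rightarrow> real) \<Rightarrow> (real \<Rightarrow> real) \<Rightarrow> real" where
  "GGt P \<mu> n f \<psi> = \<bar>real n * Eavg P \<mu> (n + 1) (\<lambda>\<sigma>. f (gram n \<sigma>) * \<psi> (inner (\<sigma> 0) (\<sigma> n)))
              - Eavg P \<mu> n (\<lambda>\<sigma>. f (gram n \<sigma>)) * Eavg P \<mu> 2 (\<lambda>\<sigma>. \<psi> (inner (\<sigma> 0) (\<sigma> 1)))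
              - (\<Sum>k\<in>{2..n}. Eavg P \<mu> n (\<lambda>\<sigma>. f (gram n \<sigma>) * \<psi> (inner (\<sigma> 0) (\<sigma> (k - 1)))))\<bar>"

definition psi :: "real \<Rightarrow> real \<Rightarrow> nat \<Rightarrow> real \<Rightarrow> real" where
  "psi e d m x = 1 - (phi e d (Suc m) x)\<^sup>2"

lemma psi_bounds: "0 \<le> psi e d m x" "psi e d m x \<le> 1"
  unfolding psi_def using phi_nonneg[of e d "Suc m" x] phi_le1[of e d "Suc m" x]
  by (auto simp: power_le_one)

lemma psi_meas[measurable]: "psi e d m \<in> borel_measurable borel"
  unfolding psi_def[abs_def] by measurable

lemma swap_bij:
  fixes l m :: nat
  assumes l: "l < m"
  shows "bij_betw (\<lambda>i. if i = 0 then l else if i = l then 0 else i) {..<m} {..<m}"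
  by (rule bij_betw_byWitness[where f'="\<lambda>i. if i = 0 then l else if i = l then 0 else i"]) (use l in \<open>auto intro: le_less_trans[OF le0]\<close>)

lemma step:
  fixes \<mu> :: "'w \<Rightarrow> 'h::{real_inner, second_countable_topology} measure"
  assumes P: "prob_space P" and mu: "\<mu> \<in> P \<rightarrow>\<^sub>M prob_algebra ball_space" and d: "d > 0" and m: "m \<ge> 1"
  shows "Eavg P \<mu> (Suc m) (Qf e d (Suc m) (Suc m)) \<ge>
          Eavg P \<mu> m (Qf e d m m) * Eavg P \<mu> 2 (\<lambda>\<sigma>. (phi e d 2 (inner (\<sigma> 0) (\<sigma> 1)))\<^sup>2)
          - GGt P \<mu> m (Hf e d m m) (psi e d m) - GGt P \<mu> m (Hf e d m m) (\<lambda>_. 1)"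
proof -
  let ?F = "Qf e d m m :: (nat \<Rightarrow> 'h) \<Rightarrow> real"
  let ?E = "Eavg P \<mu>"
  let ?g = "\<lambda>l \<sigma>. ?F \<sigma> * psi e d m (inner (\<sigma> l) (\<sigma> m))"
  define cc where "cc = ?E m ?F"
  define pp where "pp = ?E 2 (\<lambda>\<sigma>. (phi e d 2 (inner (\<sigma> 0) (\<sigma> 1)))\<^sup>2)"
  define q where "q = ?E 2 (\<lambda>\<sigma>. (phi e d (Suc m) (inner (\<sigma> 0) (\<sigma> 1)))\<^sup>2)"
  define T0 where "T0 = ?E (Suc m) ?F"
  define T1 where "T1 = ?E (Suc m) (?g 0)"
  define e1 where "e1 = GGt P \<mu> m (Hf e d m m) (psi e d m)"
  define e2 where "e2 = GGt P \<mu> m (Hf e d m m) (\<lambda>_. 1)"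
  have bF: "bm k ?F" if "m \<le> k" for k using bm_Qf[OF that d] .
  have bpsi: "bm (Suc m) (\<lambda>\<sigma>::nat \<Rightarrow> 'h. psi e d m (inner (\<sigma> l) (\<sigma> m)))" if "l < Suc m" for l
    by (rule bm_inner_comp[where C=1]) (use that psi_bounds in auto)
  have bg: "bm (Suc m) (?g l)" if "l < Suc m" for l
    by (rule bm_mult[OF bF bpsi]) (use that in auto)
  have b2: "bm 2 (\<lambda>\<sigma>::nat \<Rightarrow> 'h. h (inner (\<sigma> 0) (\<sigma> 1)))" if "h \<in> borel_measurable borel" "\<And>x. \<bar>h x\<bar> \<le> 1" for h
    by (rule bm_inner_comp[where C=1]) (use that in auto)
  have "?E (Suc m) (\<lambda>\<sigma>. ?F \<sigma> - (\<Sum>l<m. ?g l \<sigma>)) \<le> ?E (Suc m) (Qf e d (Suc m) (Suc m))"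
  proof (rule Eavg_mono[OF P mu])
    show "bm (Suc m) (\<lambda>\<sigma>. ?F \<sigma> - (\<Sum>l<m. ?g l \<sigma>))"
      by (intro bm_diff bm_sum bF bg) auto
    show "bm (Suc m) (Qf e d (Suc m) (Suc m) :: (nat \<Rightarrow> 'h) \<Rightarrow> real)" by (rule bm_Qf) (use d in auto)
    fix \<sigma> :: "nat \<Rightarrow> 'h"
    show "?F \<sigma> - (\<Sum>l<m. ?g l \<sigma>) \<le> Qf e d (Suc m) (Suc m) \<sigma>"
      using Qf_step_ineq[OF d, of e m \<sigma>] unfolding psi_def .
  qed
  moreover have "?E (Suc m) (\<lambda>\<sigma>. ?F \<sigma> - (\<Sum>l<m. ?g l \<sigma>)) = T0 - (\<Sum>l<m. ?E (Suc m) (?g l))"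
  proof -
    have "?E (Suc m) (\<lambda>\<sigma>. ?F \<sigma> - (\<Sum>l<m. ?g l \<sigma>)) = ?E (Suc m) ?F - ?E (Suc m) (\<lambda>\<sigma>. \<Sum>l<m. ?g l \<sigma>)"
      by (rule Eavg_diff[OF P mu]) (auto intro!: bm_sum bg bF)
    also have "?E (Suc m) (\<lambda>\<sigma>. \<Sum>l<m. ?g l \<sigma>) = (\<Sum>l<m. ?E (Suc m) (?g l))"
      by (rule Eavg_sum[OF P mu]) (auto intro!: bg)
    finally show ?thesis unfolding T0_def .
  qed
  moreover have "?E (Suc m) (?g l) = T1" if l: "l < m" for l
  proof -
    let ?\<pi> = "\<lambda>i. if i = 0 then l else if i = l then 0 else i"
    have "?E (Suc m) (\<lambda>\<sigma>. ?g 0 (\<lambda>i\<in>{..<Suc m}. \<sigma> (?\<pi> i))) = ?E (Suc m) (?g 0)"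
      using l by (intro Eavg_perm[OF P mu bg]) (auto simp: inj_on_def)
    moreover have "(\<lambda>\<sigma>. ?g 0 (\<lambda>i\<in>{..<Suc m}. \<sigma> (?\<pi> i))) = ?g l"
    proof
      fix \<sigma> :: "nat \<Rightarrow> 'h"
      have "?F (\<lambda>i\<in>{..<Suc m}. \<sigma> (?\<pi> i)) = ?F \<sigma>"
        by (rule Qf_perm[OF swap_bij[OF l]]) auto
      then show "?g 0 (\<lambda>i\<in>{..<Suc m}. \<sigma> (?\<pi> i)) = ?g l \<sigma>" using l m by simp
    qed
    ultimately show ?thesis unfolding T1_def by simp
  qed
  ultimately have ineq1: "T0 - real m * T1 \<le> ?E (Suc m) (Qf e d (Suc m) (Suc m))" by simp
  have fHf: "(\<lambda>\<sigma>. Hf e d m m (gram m \<sigma>)) = ?F" by (simp add: Hf_gram)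
  have z: "?E m (\<lambda>\<sigma>. Hf e d m m (gram m \<sigma>) * psi e d m (inner (\<sigma> 0) (\<sigma> (k - 1)))) = 0" if "k \<in> {2..m}" for k
  proof -
    have "(\<lambda>\<sigma>::nat \<Rightarrow> 'h. Hf e d m m (gram m \<sigma>) * psi e d m (inner (\<sigma> 0) (\<sigma> (k - 1)))) = (\<lambda>_. 0)"
    proof
      fix \<sigma> :: "nat \<Rightarrow> 'h"
      have k: "1 \<le> k - 1" "k - 1 < m" using that by auto
      show "Hf e d m m (gram m \<sigma>) * psi e d m (inner (\<sigma> 0) (\<sigma> (k - 1))) = 0"
        using Qf_zero_term[OF d k, of e \<sigma>] by (simp add: Hf_gram psi_def)
    qed
    then show ?thesis by (simp add: Eavg_const[OF P mu])
  qed
  have bphi2: "bm 2 (\<lambda>\<sigma>::nat \<Rightarrow> 'h. (phi e d j (inner (\<sigma> 0) (\<sigma> 1)))\<^sup>2)" for j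
    by (rule b2) (auto simp: abs_le_iff phi_nonneg phi_le1 power_le_one intro: order_trans[OF _ zero_le_power2])
  have Epsi: "?E 2 (\<lambda>\<sigma>. psi e d m (inner (\<sigma> 0) (\<sigma> 1))) = 1 - q"
    unfolding psi_def q_def
    using Eavg_diff[OF P mu bm_const bphi2[of "Suc m"], of 1] Eavg_const[OF P mu, of 2 1] by simp
  have "e1 = \<bar>real m * T1 - cc * (1 - q)\<bar>"
    unfolding e1_def GGt_def T1_def cc_def fHf Epsi using z by (simp add: sum.neutral Hf_gram)
  then have ineq2: "real m * T1 \<le> cc * (1 - q) + e1" by linarith
  have "e2 = \<bar>real m * T0 - cc - real (m - 1) * cc\<bar>"
    unfolding e2_def GGt_def T0_def cc_def fHf by (simp add: Eavg_const[OF P mu] Hf_gram)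
  also have "real m * T0 - cc - real (m - 1) * cc = real m * (T0 - cc)"
    using m by (simp add: of_nat_diff algebra_simps)
  finally have e2eq: "e2 = \<bar>real m * (T0 - cc)\<bar>" .
  have ineq3: "cc - e2 \<le> T0"
  proof (cases "T0 \<ge> cc")
    case True
    have "0 \<le> e2" using e2eq by simp
    then show ?thesis using True by linarith
  next
    case False
    then have "cc - T0 \<le> real m * (cc - T0)" using m by (simp add: mult_le_cancel_right1)
    also have "\<dots> \<le> e2" using e2eq by (simp add: abs_if algebra_simps)
    finally show ?thesis by simp
  qed
  have cc0: "0 \<le> cc"
    unfolding cc_def using Eavg_mono[OF P mu bm_const bF, of m 0] by (simp add: Eavg_const[OF P mu] Qf_nonneg)
  have qp: "pp \<le> q"
    unfolding pp_def q_def
  proof (rule Eavg_mono[OF P mu])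
    show "bm 2 (\<lambda>\<sigma>::nat \<Rightarrow> 'h. (phi e d 2 (inner (\<sigma> 0) (\<sigma> 1)))\<^sup>2)"
      by (rule b2) (auto simp: abs_le_iff phi_nonneg phi_le1 power_le_one intro: order_trans[OF _ zero_le_power2])
    show "bm 2 (\<lambda>\<sigma>::nat \<Rightarrow> 'h. (phi e d (Suc m) (inner (\<sigma> 0) (\<sigma> 1)))\<^sup>2)"
      by (rule b2) (auto simp: abs_le_iff phi_nonneg phi_le1 power_le_one intro: order_trans[OF _ zero_le_power2])
    fix \<sigma> :: "nat \<Rightarrow> 'h"
    show "(phi e d 2 (inner (\<sigma> 0) (\<sigma> 1)))\<^sup>2 \<le> (phi e d (Suc m) (inner (\<sigma> 0) (\<sigma> 1)))\<^sup>2"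
      using m by (intro power_mono phi_mono_j[OF d] phi_nonneg) auto
  qed
  have "cc * pp \<le> cc * q" by (rule mult_left_mono[OF qp cc0])
  then show ?thesis
    using ineq1 ineq2 ineq3 unfolding cc_def[symmetric] pp_def[symmetric] e1_def[symmetric] e2_def[symmetric]
    by (simp add: algebra_simps)
qed



theorem mainTheorem12:
  fixes P :: "'w measure"
    and \<mu> :: "nat \<Rightarrow> 'w \<Rightarrow> 'h::{real_inner, complete_space, second_countable_topology} measure"
    and \<zeta> :: "real measure"
  assumes P: "prob_space P"
    and \<mu>_rand: "\<And>N. \<mu> N \<in> P \<rightarrow>\<^sub>M prob_algebra ball_space"
    and GG: "\<And>n f \<psi>. n \<ge> 1 \<Longrightarrow>
        f \<in> borel_measurable (PiM ({..<n} \<times> {..<n}) (\<lambda>_. borel)) \<Longrightarrow>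
        (\<exists>B. \<forall>x. \<bar>f x\<bar> \<le> B) \<Longrightarrow>
        continuous_on {-1..1} \<psi> \<Longrightarrow>
        (\<lambda>N. \<bar>real n * Eavg P (\<mu> N) (n + 1) (\<lambda>\<sigma>. f (gram n \<sigma>) * \<psi> (inner (\<sigma> 0) (\<sigma> n)))
              - Eavg P (\<mu> N) n (\<lambda>\<sigma>. f (gram n \<sigma>)) * Eavg P (\<mu> N) 2 (\<lambda>\<sigma>. \<psi> (inner (\<sigma> 0) (\<sigma> 1)))
              - (\<Sum>k\<in>{2..n}. Eavg P (\<mu> N) n (\<lambda>\<sigma>. f (gram n \<sigma>) * \<psi> (inner (\<sigma> 0) (\<sigma> (k - 1)))))\<bar>)
          \<longlonglongrightarrow> 0"
    and \<zeta>_prob: "prob_space \<zeta>"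
    and \<zeta>_sets: "sets \<zeta> = sets (restrict_space borel {-1..1::real})"
    and \<zeta>_lim: "\<And>\<psi>. continuous_on {-1..1} \<psi> \<Longrightarrow>
        (\<lambda>N. Eavg P (\<mu> N) 2 (\<lambda>\<sigma>. \<psi> (inner (\<sigma> 0) (\<sigma> 1)))) \<longlonglongrightarrow> (\<integral>x. \<psi> x \<partial>\<zeta>)"
  shows "\<forall>\<epsilon>>0. \<forall>\<eta>>0. \<exists>N0. \<forall>N\<ge>N0.
           prob_space.prob P {\<omega> \<in> space P.
              measure (\<mu> N \<omega> \<Otimes>\<^sub>M \<mu> N \<omega>) {z \<in> space (\<mu> N \<omega> \<Otimes>\<^sub>M \<mu> N \<omega>). inner (fst z) (snd z) < - \<epsilon>} > \<epsilon> / 3} < \<eta>"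
proof (intro allI impI)
  fix \<epsilon> \<eta> :: real
  assume eps: "\<epsilon> > 0" and eta: "\<eta> > 0"
  interpret PP: prob_space P by (rule P)
  define n :: nat where "n = nat \<lceil>2 / \<epsilon>\<rceil> + 2"
  define d where "d = \<epsilon> / (2 * real n)"
  have n2: "n \<ge> 2" unfolding n_def by simp
  have d0: "d > 0" unfolding d_def using eps n2 by simp
  have nge: "real n \<ge> 2 / \<epsilon> + 2"
  proof -
    have "2 / \<epsilon> \<le> real (nat \<lceil>2 / \<epsilon>\<rceil>)" by (rule real_nat_ceiling_ge)
    then show ?thesis unfolding n_def by simp
  qed
  have nb: "1 + (real n - 1) * (-\<epsilon> + (real n - 1) * d) < 0"
  proof -
    have "(real n - 1) * d < real n * d" using d0 by simp
    also have "real n * d = \<epsilon> / 2" unfolding d_def using n2 by simp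
    finally have b: "-\<epsilon> + (real n - 1) * d < - \<epsilon> / 2" by simp
    have n1: "real n - 1 > 0" using n2 by simp
    have "(real n - 1) * (-\<epsilon> + (real n - 1) * d) \<le> (real n - 1) * (- \<epsilon> / 2)"
      using b n1 by (intro mult_left_mono) auto
    also have "(real n - 1) * (- \<epsilon> / 2) \<le> (2 / \<epsilon> + 1) * (- \<epsilon> / 2)"
      using nge eps by (intro mult_right_mono_neg) auto
    also have "(2 / \<epsilon> + 1) * (- \<epsilon> / 2) = -1 - \<epsilon> / 2" using eps by (simp add: field_simps)
    finally show ?thesis using eps by linarith
  qed
  define cc where "cc N m = Eavg P (\<mu> N) m (Qf \<epsilon> d m m)" for N m
  define pp where "pp N = Eavg P (\<mu> N) 2 (\<lambda>\<sigma>. (phi \<epsilon> d 2 (inner (\<sigma> 0) (\<sigma> 1)))\<^sup>2)" for N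
  define ee where "ee N j = GGt P (\<mu> N) j (Hf \<epsilon> d j j) (psi \<epsilon> d j) + GGt P (\<mu> N) j (Hf \<epsilon> d j j) (\<lambda>_. 1)" for N j
  define S where "S N m = (\<Sum>j\<in>{1..<m}. ee N j)" for N m
  have bh: "bm 2 (\<lambda>\<sigma>::nat \<Rightarrow> 'h. (phi \<epsilon> d 2 (inner (\<sigma> 0) (\<sigma> 1)))\<^sup>2)"
    by (rule bm_inner_comp[where C=1]) (auto simp: abs_le_iff phi_nonneg phi_le1 power_le_one intro: order_trans[OF _ zero_le_power2])
  have pp01: "0 \<le> pp N" "pp N \<le> 1" for N
  proof -
    have "Eavg P (\<mu> N) 2 (\<lambda>_. 0) \<le> pp N" unfolding pp_def
      by (rule Eavg_mono[OF P \<mu>_rand bm_const bh]) simp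
    then show "0 \<le> pp N" by (simp add: Eavg_const[OF P \<mu>_rand])
    have "pp N \<le> Eavg P (\<mu> N) 2 (\<lambda>_. 1)" unfolding pp_def
      by (rule Eavg_mono[OF P \<mu>_rand bh bm_const]) (simp add: phi_nonneg phi_le1 power_le_one)
    then show "pp N \<le> 1" by (simp add: Eavg_const[OF P \<mu>_rand])
  qed
  have ee0: "0 \<le> ee N j" for N j unfolding ee_def GGt_def by simp
  have S0: "0 \<le> S N m" for N m unfolding S_def by (intro sum_nonneg ee0)
  have main: "pp N ^ (m - 1) - S N m \<le> cc N m" if "1 \<le> m" for N m
    using that
  proof (induction m rule: nat_induct_at_least)
    case base
    have "OD 1 = {}" unfolding OD_def by auto
    then have "Qf \<epsilon> d 1 1 = (\<lambda>_::nat \<Rightarrow> 'h. 1)" unfolding Qf_def[abs_def] by simp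
    then show ?case unfolding cc_def S_def by (simp add: Eavg_const[OF P \<mu>_rand])
  next
    case (Suc m)
    have st: "cc N m * pp N - ee N m \<le> cc N (Suc m)"
      using step[OF P \<mu>_rand[of N] d0 Suc.hyps, where e=\<epsilon>] unfolding cc_def pp_def ee_def by linarith
    have "(pp N ^ (m - 1) - S N m) * pp N \<le> cc N m * pp N"
      using Suc.IH pp01[of N] by (intro mult_right_mono) auto
    moreover have "(pp N ^ (m - 1) - S N m) * pp N = pp N ^ m - S N m * pp N"
      using Suc.hyps by (cases m) (auto simp: algebra_simps)
    moreover have "S N m * pp N \<le> S N m" using S0[of N m] pp01[of N] by (simp add: mult_left_le)
    moreover have "S N (Suc m) = S N m + ee N m" unfolding S_def using Suc.hyps by simp
    ultimately show ?case using st by simp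
  qed
  have ccn: "cc N n \<le> 0" for N
  proof -
    have "cc N n \<le> Eavg P (\<mu> N) n (\<lambda>_. 0)" unfolding cc_def
    proof (rule Eavg_mono[OF P \<mu>_rand _ bm_const])
      show "bm n (Qf \<epsilon> d n n :: (nat \<Rightarrow> 'h) \<Rightarrow> real)" by (rule bm_Qf) (use d0 in auto)
      fix \<sigma> :: "nat \<Rightarrow> 'h" assume "\<And>i. i < n \<Longrightarrow> norm (\<sigma> i) \<le> 1"
      then show "Qf \<epsilon> d n n \<sigma> \<le> 0" using Qf_positivity[OF d0 _ nb, of \<sigma>] n2 by simp
    qed
    then show ?thesis by (simp add: Eavg_const[OF P \<mu>_rand])
  qed
  have powS: "pp N ^ (n - 1) \<le> S N n" for N using main[of n N] ccn[of N] n2 by simp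
  have ee_lim: "(\<lambda>N. ee N j) \<longlonglongrightarrow> 0" if j: "j \<in> {1..<n}" for j
  proof -
    have j1: "j \<ge> 1" using j by simp
    have fm: "Hf \<epsilon> d j j \<in> borel_measurable (PiM ({..<j} \<times> {..<j}) (\<lambda>_. borel))"
      unfolding Hf_def[abs_def]
    proof (rule borel_measurable_prod)
      fix p assume "p \<in> OD j"
      then have "p \<in> {..<j} \<times> {..<j}" unfolding OD_def by auto
      then have "(\<lambda>x. x p) \<in> PiM ({..<j} \<times> {..<j}) (\<lambda>_. borel) \<rightarrow>\<^sub>M (borel :: real measure)"
        by (rule measurable_component_singleton)
      from measurable_compose[OF this phi_meas]
      show "(\<lambda>x. phi \<epsilon> d j (x p)) \<in> borel_measurable (PiM ({..<j} \<times> {..<j}) (\<lambda>_. borel))" .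
    qed
    have fb: "\<exists>B. \<forall>x. \<bar>Hf \<epsilon> d j j x\<bar> \<le> B"
      by (rule exI[of _ 1]) (auto simp: Hf_def abs_le_iff phi_nonneg phi_le1 intro!: prod_le_1 order_trans[OF _ prod_nonneg])
    have c1: "continuous_on {-1..1} (psi \<epsilon> d j)"
      unfolding psi_def[abs_def] by (intro continuous_intros phi_cont)
    have c2: "continuous_on {-1..1} (\<lambda>_::real. 1::real)" by (rule continuous_on_const)
    show ?thesis unfolding ee_def GGt_def
      by (rule tendsto_add_zero[OF GG[OF j1 fm fb c1] GG[OF j1 fm fb c2]])
  qed
  have S_lim: "(\<lambda>N. S N n) \<longlonglongrightarrow> 0"
    unfolding S_def by (rule tendsto_null_sum) (rule ee_lim)
  define \<delta> where "\<delta> = \<eta> * \<epsilon> / 6"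
  have \<delta>0: "\<delta> > 0" unfolding \<delta>_def using eta eps by simp
  have "eventually (\<lambda>N. S N n < \<delta> ^ (n - 1)) sequentially"
    using order_tendstoD(2)[OF S_lim] \<delta>0 by simp
  then obtain N0 where N0: "\<And>N. N \<ge> N0 \<Longrightarrow> S N n < \<delta> ^ (n - 1)"
    unfolding eventually_sequentially by blast
  show "\<exists>N0. \<forall>N\<ge>N0. prob_space.prob P {\<omega> \<in> space P.
              measure (\<mu> N \<omega> \<Otimes>\<^sub>M \<mu> N \<omega>) {z \<in> space (\<mu> N \<omega> \<Otimes>\<^sub>M \<mu> N \<omega>). inner (fst z) (snd z) < - \<epsilon>} > \<epsilon> / 3} < \<eta>"
  proof (intro exI allI impI)
    fix N assume N: "N \<ge> N0"
    have ppd: "pp N < \<delta>"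
    proof (rule ccontr)
      assume "\<not> pp N < \<delta>"
      then have "\<delta> ^ (n - 1) \<le> pp N ^ (n - 1)" using \<delta>0 by (intro power_mono) auto
      then show False using powS[of N] N0[OF N] by simp
    qed
    define G where "G \<omega> = gibbs_avg (\<mu> N \<omega>) 2 (\<lambda>\<sigma>. (phi \<epsilon> d 2 (inner (\<sigma> 0) (\<sigma> 1)))\<^sup>2)" for \<omega>
    let ?A = "{\<omega> \<in> space P.
              measure (\<mu> N \<omega> \<Otimes>\<^sub>M \<mu> N \<omega>) {z \<in> space (\<mu> N \<omega> \<Otimes>\<^sub>M \<mu> N \<omega>). inner (fst z) (snd z) < - \<epsilon>} > \<epsilon> / 3}"
    let ?B = "{\<omega> \<in> space P. G \<omega> \<ge> \<epsilon> / 3}"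
    have Gm: "G \<in> borel_measurable P" unfolding G_def[abs_def] by (rule gibbs_meas[OF \<mu>_rand bh])
    have Gi: "integrable P G" unfolding G_def[abs_def] by (rule Eavg_integrable[OF P \<mu>_rand bh])
    have B: "?B \<in> sets P" using Gm by measurable
    have AB: "?A \<subseteq> ?B"
    proof
      fix \<omega> assume w: "\<omega> \<in> ?A"
      then have ws: "\<omega> \<in> space P" by simp
      have "measure (\<mu> N \<omega> \<Otimes>\<^sub>M \<mu> N \<omega>) {z \<in> space (\<mu> N \<omega> \<Otimes>\<^sub>M \<mu> N \<omega>). inner (fst z) (snd z) < - \<epsilon>} \<le> G \<omega>"
        unfolding G_def
        by (rule pair_le_gibbs[OF mu_props(1,2)[OF \<mu>_rand ws]])
           (auto simp: phi_nonneg phi_le1 power_le_one phi_two[OF d0])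
      then show "\<omega> \<in> ?B" using w by auto
    qed
    have G0: "0 \<le> G \<omega>" if "\<omega> \<in> space P" for \<omega>
      unfolding G_def gibbs_avg_def by (rule Bochner_Integration.integral_nonneg) simp
    have "PP.prob ?A \<le> PP.prob ?B"
    proof (cases "?A \<in> sets P")
      case True then show ?thesis using AB B by (intro PP.finite_measure_mono) auto
    next
      case False then show ?thesis by (simp add: measure_notin_sets)
    qed
    also have "PP.prob ?B \<le> (\<integral>\<omega>. G \<omega> \<partial>P) / (\<epsilon> / 3)"
      using G0 eps by (intro integral_Markov_inequality_measure[OF Gi B]) auto
    also have "(\<integral>\<omega>. G \<omega> \<partial>P) = pp N" unfolding G_def pp_def Eavg_def ..
    also have "pp N / (\<epsilon> / 3) < \<delta> / (\<epsilon> / 3)" using ppd eps by (intro divide_strict_right_mono) auto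
    also have "\<delta> / (\<epsilon> / 3) = \<eta> / 2" unfolding \<delta>_def using eps by (simp add: field_simps)
    also have "\<eta> / 2 < \<eta>" using eta by simp
    finally show "PP.prob ?A < \<eta>" .
  qed
qed


end
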